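(* Let $\mathcal{A}\in\{0,1\}^{N\times N}$ be the (symmetric) adjacency matrix of an undirected graph. Let $\mathcal{S}_{\mathcal{A}}=\{M\in\mathbb{C}^{N\times N}: M^T=-M,\ M_{ij}=0\text{ whenever }\mathcal{A}_{ij}=0\}$, equipped with the Frobenius inner product $\langle M_1,M_2\rangle=\operatorname{tr}(M_1^*M_2)$, and $\mathbb{C}^N$ with the standard inner product. Define $\mathcal{L}_{\mathcal{A}}:\mathcal{S}_{\mathcal{A}}\to\mathbb{C}^N$ by $\mathcal{L}_{\mathcal{A}}(M)=M\mathbb{1}$, with adjoint $\mathcal{L}_{\mathcal{A}}^\dagger$. Then $\mathcal{L}_{\mathcal{A}}\mathcal{L}_{\mathcal{A}}^\dagger=\frac12 L$, where $L=\operatorname{diag}(\mathcal{A}\mathbb{1})-\mathcal{A}$ is the Laplacian of the graph.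
   Context: $\mathbb{1}$ is the all-ones vector; $\operatorname{diag}(v)$ is the diagonal matrix with the entries of $v$ on its diagonal; $M^T$ denotes transpose (not conjugate transpose). *)

theory Defs
  imports "HOL-Analysis.Analysis"
begin

definition ones :: "'a::one ^ 'n" where
  "ones = (\<chi> i. 1)"

definition diag_mat :: "'a::zero ^ 'n \<Rightarrow> 'a ^ 'n ^ 'n" where
  "diag_mat v = (\<chi> i j. if i = j then v $ i else 0)"

definition laplacian :: "real ^ 'n ^ 'n \<Rightarrow> real ^ 'n ^ 'n" where
  "laplacian A = diag_mat (A *v ones) - A"

definition adjacency_matrix :: "real ^ 'n ^ 'n \<Rightarrow> bool" where
  "adjacency_matrix A \<longleftrightarrow> (\<forall>i j. A $ i $ j \<in> {0, 1}) \<and> transpose A = A"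

definition skew_space :: "real ^ 'n ^ 'n \<Rightarrow> (complex ^ 'n ^ 'n) set" where
  "skew_space A = {M. transpose M = - M \<and> (\<forall>i j. A $ i $ j = 0 \<longrightarrow> M $ i $ j = 0)}"

definition frob_inner :: "complex ^ 'n ^ 'n \<Rightarrow> complex ^ 'n ^ 'n \<Rightarrow> complex" where
  "frob_inner M1 M2 = (\<Sum>i\<in>UNIV. \<Sum>j\<in>UNIV. cnj (M1 $ i $ j) * M2 $ i $ j)"

definition vec_inner :: "complex ^ 'n \<Rightarrow> complex ^ 'n \<Rightarrow> complex" where
  "vec_inner x y = (\<Sum>i\<in>UNIV. cnj (x $ i) * y $ i)"

definition LA :: "complex ^ 'n ^ 'n \<Rightarrow> complex ^ 'n" where
  "LA M = M *v ones"

definition is_LA_adjoint :: "real ^ 'n ^ 'n \<Rightarrow> (complex ^ 'n \<Rightarrow> complex ^ 'n ^ 'n) \<Rightarrow> bool" where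
  "is_LA_adjoint A Ld \<longleftrightarrow> (\<forall>v. Ld v \<in> skew_space A) \<and>
     (\<forall>M \<in> skew_space A. \<forall>v. vec_inner (LA M) v = frob_inner M (Ld v))"

definition complexify :: "real ^ 'n ^ 'n \<Rightarrow> complex ^ 'n ^ 'n" where
  "complexify B = (\<chi> i j. complex_of_real (B $ i $ j))"

end

theory Submission
  imports Defs
begin

definition Xd :: "real ^ 'n ^ 'n \<Rightarrow> complex ^ 'n \<Rightarrow> complex ^ 'n ^ 'n" where
  "Xd A v = (\<chi> i j. of_real (A $ i $ j) * (v $ i - v $ j) / 2)"

lemma transpose_nth: "transpose M $ i $ j = M $ j $ i"
  by (simp add: transpose_def)

lemma symA: "adjacency_matrix A \<Longrightarrow> A $ j $ i = A $ i $ j"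
  unfolding adjacency_matrix_def
  by (metis transpose_nth)

lemma Xd_in: "adjacency_matrix A \<Longrightarrow> Xd A v \<in> skew_space A"
proof -
  assume a: "adjacency_matrix A"
  have t: "transpose (Xd A v) = - Xd A v"
  proof (rule vec_eq_iff[THEN iffD2], rule allI, rule vec_eq_iff[THEN iffD2], rule allI)
    fix i j
    have e: "A $ j $ i = A $ i $ j" using symA[OF a] .
    have "transpose (Xd A v) $ i $ j = of_real (A $ j $ i) * (v $ j - v $ i) / 2"
      by (simp add: transpose_nth Xd_def)
    also have "\<dots> = - (of_real (A $ i $ j) * (v $ i - v $ j) / 2)"
      unfolding e by (simp add: field_simps)
    also have "\<dots> = (- Xd A v) $ i $ j" by (simp add: Xd_def)
    finally show "transpose (Xd A v) $ i $ j = (- Xd A v) $ i $ j" .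
  qed
  moreover have "\<forall>i j. A $ i $ j = 0 \<longrightarrow> Xd A v $ i $ j = 0" by (simp add: Xd_def)
  ultimately show ?thesis unfolding skew_space_def by blast
qed

lemma skew_entry: "M \<in> skew_space A \<Longrightarrow> M $ j $ i = - M $ i $ j"
  unfolding skew_space_def
  by (metis (mono_tags, lifting) mem_Collect_eq vector_uminus_component transpose_nth)

lemma cnjA: "adjacency_matrix A \<Longrightarrow> M \<in> skew_space A \<Longrightarrow>
   cnj (M $ i $ j) * of_real (A $ i $ j) = cnj (M $ i $ j)"
proof -
  assume a: "adjacency_matrix A" and m: "M \<in> skew_space A"
  have "A $ i $ j \<in> {0,1}" using a unfolding adjacency_matrix_def by blast
  then show ?thesis using m unfolding skew_space_def by auto
qed

lemma Xd_adj:
  assumes a: "adjacency_matrix A" and m: "M \<in> skew_space A"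
  shows "vec_inner (LA M) v = frob_inner M (Xd A v)"
proof -
  define S1 where "S1 = (\<Sum>i\<in>UNIV. \<Sum>j\<in>UNIV. cnj (M $ i $ j) * v $ i)"
  define S2 where "S2 = (\<Sum>i\<in>UNIV. \<Sum>j\<in>UNIV. cnj (M $ i $ j) * v $ j)"
  have L: "vec_inner (LA M) v = S1"
    unfolding vec_inner_def LA_def ones_def S1_def
    by (simp add: matrix_vector_mult_def sum_distrib_right)
  have ent: "cnj (M $ i $ j) * (Xd A v $ i $ j) = (cnj (M $ i $ j) * v $ i - cnj (M $ i $ j) * v $ j) / 2" for i j
  proof -
    have c: "cnj (M $ i $ j) * of_real (A $ i $ j) = cnj (M $ i $ j)" using cnjA[OF a m] .
    have "cnj (M $ i $ j) * (Xd A v $ i $ j)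
        = (cnj (M $ i $ j) * of_real (A $ i $ j)) * (v $ i - v $ j) / 2" 
      unfolding Xd_def by simp
    also have "\<dots> = (cnj (M $ i $ j) * v $ i - cnj (M $ i $ j) * v $ j) / 2"
      unfolding c by (simp add: right_diff_distrib)
    finally show ?thesis .
  qed
  have R1: "frob_inner M (Xd A v) = (\<Sum>i\<in>UNIV. \<Sum>j\<in>UNIV. (cnj (M $ i $ j) * v $ i - cnj (M $ i $ j) * v $ j) / 2)"
    unfolding frob_inner_def ent ..
  have R2: "\<dots> = (S1 - S2) / 2"
    unfolding S1_def S2_def by (simp only: sum_divide_distrib[symmetric] sum_subtractf)
  have sw: "S2 = (\<Sum>j\<in>UNIV. \<Sum>i\<in>UNIV. cnj (M $ i $ j) * v $ j)"
    unfolding S2_def by (rule sum.swap)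
  have neg: "\<And>i j. cnj (M $ i $ j) * v $ j = - (cnj (M $ j $ i) * v $ j)"
  proof -
    fix i j
    have "M $ i $ j = - M $ j $ i" by (metis skew_entry[OF m] minus_minus)
    thus "cnj (M $ i $ j) * v $ j = - (cnj (M $ j $ i) * v $ j)" by simp
  qed
  have "S2 = - S1"
    unfolding sw S1_def sum_negf[symmetric] neg ..
  thus ?thesis using L R1 R2 by simp
qed

lemma cnj_sq: "cnj z * z = complex_of_real ((cmod z)^2)"
  by (metis complex_norm_square mult.commute of_real_power)

lemma frob_self_zero:
  assumes "frob_inner D D = 0" shows "D = (0 :: complex ^ 'n ^ 'n)"
proof -
  have e: "frob_inner D D = of_real (\<Sum>i\<in>UNIV. \<Sum>j\<in>UNIV. (cmod (D $ i $ j))^2)"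
    unfolding frob_inner_def cnj_sq of_real_sum ..
  hence s0: "(\<Sum>i\<in>UNIV. \<Sum>j\<in>UNIV. (cmod (D $ i $ j))^2) = 0" using assms by (metis of_real_eq_0_iff)
  have nn: "\<And>i. 0 \<le> (\<Sum>j\<in>UNIV. (cmod (D $ i $ j))^2)" by (intro sum_nonneg) simp
  have z1: "(\<Sum>j\<in>UNIV. (cmod (D $ i $ j))^2) = 0" for i
    using s0 sum_nonneg_eq_0_iff[OF finite, where f="\<lambda>i. \<Sum>j\<in>UNIV. (cmod (D $ i $ j))^2"] nn
    by blast
  have z2: "(cmod (D $ i $ j))^2 = 0" for i j
    using z1[of i] sum_nonneg_eq_0_iff[OF finite, where f="\<lambda>j. (cmod (D $ i $ j))^2"]
    by simp
  hence "\<forall>i j. D $ i $ j = 0" by simp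
  thus ?thesis by (simp add: vec_eq_iff)
qed

lemma skew_diff: "M \<in> skew_space A \<Longrightarrow> N \<in> skew_space A \<Longrightarrow> M - N \<in> skew_space A"
proof -
  assume m: "M \<in> skew_space A" and n: "N \<in> skew_space A"
  have t: "transpose (M - N) = transpose M - transpose N"
    by (simp add: vec_eq_iff transpose_nth)
  have "transpose (M - N) = - (M - N)"
    using m n unfolding t skew_space_def by simp
  moreover have "\<forall>i j. A $ i $ j = 0 \<longrightarrow> (M - N) $ i $ j = 0"
    using m n unfolding skew_space_def by simp
  ultimately show ?thesis unfolding skew_space_def by blast
qed

lemma frob_diff: "frob_inner D (M - N) = frob_inner D M - frob_inner D N"
  unfolding frob_inner_def by (simp add: right_diff_distrib sum_subtractf)

lemma LA_Xd: "LA (Xd A v) = complexify ((1/2) *\<^sub>R laplacian A) *v v"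
proof -
  have "\<And>i. (\<Sum>j\<in>UNIV. of_real (A $ i $ j) * (v $ i - v $ j) / 2)
     = (\<Sum>j\<in>UNIV. complex_of_real ((if i = j then (\<Sum>k\<in>UNIV. A $ i $ k) else 0) - A $ i $ j) / 2 * v $ j)"
  proof -
    fix i
    have "(\<Sum>j\<in>UNIV. complex_of_real ((if i = j then (\<Sum>k\<in>UNIV. A $ i $ k) else 0) - A $ i $ j) / 2 * v $ j)
       = (\<Sum>j\<in>UNIV. (if i = j then of_real (\<Sum>k\<in>UNIV. A $ i $ k) * v $ j / 2 else 0) - of_real (A $ i $ j) * v $ j / 2)"
      by (rule sum.cong) (auto simp: field_simps)
    also have "\<dots> = of_real (\<Sum>k\<in>UNIV. A $ i $ k) * v $ i / 2 - (\<Sum>j\<in>UNIV. of_real (A $ i $ j) * v $ j / 2)"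
      by (simp add: sum_subtractf)
    also have "\<dots> = (\<Sum>j\<in>UNIV. of_real (A $ i $ j) * (v $ i - v $ j) / 2)"
    proof -
      have a1: "of_real (\<Sum>k\<in>UNIV. A $ i $ k) * v $ i / 2 = (\<Sum>j\<in>UNIV. of_real (A $ i $ j) * v $ i / 2)"
        by (simp add: sum_divide_distrib sum_distrib_right)
      show ?thesis unfolding a1 sum_subtractf[symmetric]
        by (rule sum.cong) (auto simp: field_simps)
    qed
    finally show "(\<Sum>j\<in>UNIV. of_real (A $ i $ j) * (v $ i - v $ j) / 2)
     = (\<Sum>j\<in>UNIV. complex_of_real ((if i = j then (\<Sum>k\<in>UNIV. A $ i $ k) else 0) - A $ i $ j) / 2 * v $ j)"
      by simp
  qed
  moreover have "\<And>i. LA (Xd A v) $ i = (\<Sum>j\<in>UNIV. of_real (A $ i $ j) * (v $ i - v $ j) / 2)"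
    by (simp add: LA_def matrix_vector_mult_def Xd_def ones_def)
  moreover have "\<And>i. (complexify ((1/2) *\<^sub>R laplacian A) *v v) $ i
      = (\<Sum>j\<in>UNIV. complex_of_real ((if i = j then (\<Sum>k\<in>UNIV. A $ i $ k) else 0) - A $ i $ j) / 2 * v $ j)"
  proof -
    fix i
    have deg: "(A *v ones) $ i = (\<Sum>k\<in>UNIV. A $ i $ k)"
      by (simp add: matrix_vector_mult_def ones_def)
    have "(complexify ((1/2) *\<^sub>R laplacian A) *v v) $ i
        = (\<Sum>j\<in>UNIV. complexify ((1/2) *\<^sub>R laplacian A) $ i $ j * v $ j)"
      by (simp add: matrix_vector_mult_def)
    also have "\<dots> = (\<Sum>j\<in>UNIV. complex_of_real ((if i = j then (\<Sum>k\<in>UNIV. A $ i $ k) else 0) - A $ i $ j) / 2 * v $ j)"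
      by (rule sum.cong) (auto simp: complexify_def laplacian_def diag_mat_def deg)
    finally show "(complexify ((1/2) *\<^sub>R laplacian A) *v v) $ i
      = (\<Sum>j\<in>UNIV. complex_of_real ((if i = j then (\<Sum>k\<in>UNIV. A $ i $ k) else 0) - A $ i $ j) / 2 * v $ j)" .
  qed
  ultimately show ?thesis by (simp add: vec_eq_iff)
qed

theorem lemma8:
  fixes A :: "real ^ 'n ^ 'n"
  assumes "adjacency_matrix A"
  shows "(\<exists>Ld. is_LA_adjoint A Ld) \<and>
         (\<forall>Ld. is_LA_adjoint A Ld \<longrightarrow>
            (\<forall>v. LA (Ld v) = complexify ((1/2) *\<^sub>R laplacian A) *v v))"
proof (intro conjI allI impI)
  show "\<exists>Ld. is_LA_adjoint A Ld"
    using Xd_in[OF assms] Xd_adj[OF assms] unfolding is_LA_adjoint_def by blast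
next
  fix Ld v assume h: "is_LA_adjoint A Ld"
  have inS: "Ld v \<in> skew_space A" using h unfolding is_LA_adjoint_def by blast
  let ?D = "Ld v - Xd A v"
  have DS: "?D \<in> skew_space A" using skew_diff[OF inS Xd_in[OF assms]] .
  have "frob_inner ?D (Ld v) = vec_inner (LA ?D) v" using h DS unfolding is_LA_adjoint_def by simp
  moreover have "frob_inner ?D (Xd A v) = vec_inner (LA ?D) v" using Xd_adj[OF assms DS] by simp
  ultimately have "frob_inner ?D ?D = 0" by (simp add: frob_diff)
  hence "Ld v = Xd A v" using frob_self_zero by fastforce
  thus "LA (Ld v) = complexify ((1/2) *\<^sub>R laplacian A) *v v" using LA_Xd by simp
qed

end
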